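(* Consider the local time-stepping Adams–Bashforth scheme of order $k$ described in the context, and suppose that for each set $s$ the right-hand side splits as $\mathbf{D}^s(\mathbf{y}^1,\ldots,\mathbf{y}^S)=\mathbf{V}^s(\mathbf{y}^s)+\mathbf{B}^s(\mathbf{y}^1,\ldots,\mathbf{y}^S)$, where $\mathbf{V}^s$ depends only on $\mathbf{y}^s$. Then for every set $s$ and step index $m$ (large enough that all indices exist), $$\mathbf{y}^s_{m+1}-\mathbf{y}^s_m=\Delta t^s_m\sum_{j=0}^{k-1}\alpha^s_{mj}\,\mathbf{V}^s(\mathbf{y}^s_{m-j})+\sum_{n=n^s(m)}^{n^s(m+1)-1}\ \sum_{q^1=m^1(n)-(k-1)}^{m^1(n)}\cdots\sum_{q^S=m^S(n)-(k-1)}^{m^S(n)}\beta_{n;q^1\cdots q^S}\,\mathbf{B}^s(\mathbf{y}^1_{q^1},\ldots,\mathbf{y}^S_{q^S}),$$ where $\Delta t^s_m=t^s_{m+1}-t^s_m$ and $\alpha^s_{mj}=\frac{1}{\Delta t^s_m}\int_{t^s_m}^{t^s_{m+1}}\ell_j(t;t^s_m,t^s_{m-1},\ldots,t^s_{m-(k-1)})\,dt$ are the standard (variable-step) Adams–Bashforth coefficients for the evaluation times of set $s$. That is, the volume part is advanced by the standard global Adams–Bashforth rule on set $s$'s own times, and only the coupling terms use the local time-stepping coefficients.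
   Context: We solve an autonomous system $\frac{d\mathbf{y}}{dt}=\mathbf{D}(\mathbf{y})$, $\mathbf{y}\in\mathbb{R}^N$. The components of $\mathbf{y}$ are partitioned into $S$ sets, $\mathbf{y}=(\mathbf{y}^1,\ldots,\mathbf{y}^S)$, and $\mathbf{D}^s$ denotes the components of $\mathbf{D}$ belonging to set $s$. Set $s$ is evaluated at strictly increasing times $t^s_0<t^s_1<\cdots$, and $\mathbf{y}^s_q$ denotes the numerical value of $\mathbf{y}^s$ at time $t^s_q$. Let $\tilde t_0<\tilde t_1<\cdots$ be the increasing enumeration of the union of all evaluation times of all sets, $\Delta\tilde t_n=\tilde t_{n+1}-\tilde t_n$. For each $s,n$ let $m^s(n)$ be the index with $t^s_{m^s(n)}\le\tilde t_n<t^s_{m^s(n)+1}$, and let $n^s(m)$ be defined by $\tilde t_{n^s(m)}=t^s_m$. Lagrange polynomials: $\ell_j(t;\tau_0,\ldots,\tau_{k-1})=\prod_{i\ne j}\frac{t-\tau_i}{\tau_j-\tau_i}$. Adams–Bashforth coefficients for the merged sequence: $\tilde\alpha_{ni}=\frac{1}{\Delta\tilde t_n}\int_{\tilde t_n}^{\tilde t_{n+1}}\ell_i(t;\tilde t_n,\ldots,\tilde t_{n-(k-1)})\,dt$. Define $\beta_{n;q^1\cdots q^S}=\Delta\tilde t_n\sum_{i=0}^{k-1}\tilde\alpha_{ni}\prod_{s=1}^S\ell_{m^s(n)-q^s}\big(\tilde t_{n-i};t^s_{m^s(n)},\ldots,t^s_{m^s(n)-(k-1)}\big)$. The scheme updates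 set $s$ from $t^s_m$ to $t^s_{m+1}$ by $\mathbf{y}^s_{m+1}=\mathbf{y}^s_m+\sum_{n=n^s(m)}^{n^s(m+1)-1}\sum_{q^1=m^1(n)-(k-1)}^{m^1(n)}\cdots\sum_{q^S=m^S(n)-(k-1)}^{m^S(n)}\beta_{n;q^1\cdots q^S}\,\mathbf{D}^s(\mathbf{y}^1_{q^1},\ldots,\mathbf{y}^S_{q^S})$. *)

theory Defs
  imports "HOL-Analysis.Analysis" "HOL-Library.FuncSet"
begin

definition lagrange :: "(nat \<Rightarrow> real) \<Rightarrow> nat \<Rightarrow> nat \<Rightarrow> real \<Rightarrow> real" where
  "lagrange tau k j x = (\<Prod>i\<in>{..<k} - {j}. (x - tau i) / (tau j - tau i))"

definition ab_coeff :: "(nat \<Rightarrow> real) \<Rightarrow> nat \<Rightarrow> nat \<Rightarrow> nat \<Rightarrow> real" where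
  "ab_coeff T k n i =
     integral {T n..T (Suc n)} (lagrange (\<lambda>j. T (n - j)) k i) / (T (Suc n) - T n)"

text \<open>m^s(n): the index m with T m \<le> x < T (m+1), applied to x = merged time.\<close>
definition mIdx :: "(nat \<Rightarrow> real) \<Rightarrow> real \<Rightarrow> nat" where
  "mIdx T x = (THE m. T m \<le> x \<and> x < T (Suc m))"

text \<open>n^s(m): the index n of the merged sequence with tt n = x (x = t^s_m).\<close>
definition nIdx :: "(nat \<Rightarrow> real) \<Rightarrow> real \<Rightarrow> nat" where
  "nIdx tt x = (THE n. tt n = x)"

text \<open>Local time-stepping coefficient beta_{n; q^0 ... q^(S-1)}; sets are indexed 0..S-1
  and the multi-index is a function q on {..<S}.\<close>
definition lts_beta :: "nat \<Rightarrow> nat \<Rightarrow> (nat \<Rightarrow> nat \<Rightarrow> real) \<Rightarrow> (nat \<Rightarrow> real)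
    \<Rightarrow> nat \<Rightarrow> (nat \<Rightarrow> nat) \<Rightarrow> real" where
  "lts_beta S k t tt n q =
     (tt (Suc n) - tt n) *
     (\<Sum>i<k. ab_coeff tt k n i *
        (\<Prod>s<S. lagrange (\<lambda>j. t s (mIdx (t s) (tt n) - j)) k
                   (mIdx (t s) (tt n) - q s) (tt (n - i))))"

definition lts_qset :: "nat \<Rightarrow> nat \<Rightarrow> (nat \<Rightarrow> nat \<Rightarrow> real) \<Rightarrow> (nat \<Rightarrow> real)
    \<Rightarrow> nat \<Rightarrow> (nat \<Rightarrow> nat) set" where
  "lts_qset S k t tt n =
     PiE {..<S} (\<lambda>s. {mIdx (t s) (tt n) - (k - 1) .. mIdx (t s) (tt n)})"

end

theory Submission
  imports Defs "HOL-Computational_Algebra.Polynomial"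
begin


definition lagpoly :: "(nat \<Rightarrow> real) \<Rightarrow> nat \<Rightarrow> nat \<Rightarrow> real poly" where
  "lagpoly tau k j = (\<Prod>i\<in>{..<k} - {j}. [: - tau i / (tau j - tau i), 1 / (tau j - tau i) :])"

lemma poly_lagpoly: "poly (lagpoly tau k j) x = lagrange tau k j x"
  unfolding lagpoly_def lagrange_def poly_prod
  by (rule prod.cong) (auto simp: diff_divide_distrib)

lemma degree_lagpoly: assumes "j < k" shows "degree (lagpoly tau k j) \<le> k - 1"
proof -
  have "degree (lagpoly tau k j) \<le> sum (degree \<circ> (\<lambda>i. [: - tau i / (tau j - tau i), 1 / (tau j - tau i) :])) ({..<k} - {j})"
    unfolding lagpoly_def by (rule degree_prod_sum_le) auto
  also have "\<dots> \<le> sum (\<lambda>i. 1) ({..<k} - {j})"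
    by (rule sum_mono) auto
  also have "\<dots> = k - 1" using assms by simp
  finally show ?thesis .
qed

lemma lagrange_node:
  assumes inj: "inj_on tau {..<k}" and "i < k" "l < k"
  shows "lagrange tau k i (tau l) = (if i = l then 1 else 0)"
proof (cases "i = l")
  case True
  have "lagrange tau k i (tau l) = (\<Prod>j\<in>{..<k} - {i}. 1)"
    unfolding lagrange_def using True inj assms
    by (intro prod.cong) (auto simp: inj_on_def)
  then show ?thesis using True by simp
next
  case False
  have "lagrange tau k i (tau l) = 0"
    unfolding lagrange_def using False assms by (intro prod_zero) auto
  then show ?thesis using False by simp
qed

lemma lagrange_exact:
  assumes inj: "inj_on tau {..<k}" and deg: "degree p < k"
  shows "(\<Sum>i<k. poly p (tau i) * lagrange tau k i x) = poly p x"
proof -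
  define Q where "Q = (\<Sum>i<k. smult (poly p (tau i)) (lagpoly tau k i)) - p"
  have degQ: "degree Q < k"
  proof -
    have "degree Q \<le> k - 1" unfolding Q_def
      using deg by (intro degree_diff_le degree_sum_le) (auto intro: order.trans[OF degree_smult_le] degree_lagpoly simp del: One_nat_def)
    thus ?thesis using deg by linarith
  qed
  have polyQ: "poly Q z = (\<Sum>i<k. poly p (tau i) * lagrange tau k i z) - poly p z" for z
    unfolding Q_def by (simp add: poly_sum poly_lagpoly)
  have root: "poly Q (tau l) = 0" if "l < k" for l
  proof -
    have "(\<Sum>i<k. poly p (tau i) * lagrange tau k i (tau l)) = (\<Sum>i<k. if i = l then poly p (tau l) else 0)"
      using that inj by (intro sum.cong) (auto simp: lagrange_node)
    also have "\<dots> = poly p (tau l)" using that by simp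
    finally show ?thesis by (simp add: polyQ)
  qed
  have "Q = 0"
  proof (rule ccontr)
    assume "Q \<noteq> 0"
    hence fin: "finite {z. poly Q z = 0}" and c: "card {z. poly Q z = 0} \<le> degree Q"
      by (auto intro: poly_roots_finite card_poly_roots_bound)
    have "tau ` {..<k} \<subseteq> {z. poly Q z = 0}" using root by auto
    hence "card (tau ` {..<k}) \<le> card {z. poly Q z = 0}" using fin by (rule card_mono[rotated])
    moreover have "card (tau ` {..<k}) = k" using inj by (simp add: card_image)
    ultimately show False using c degQ by linarith
  qed
  then show ?thesis using polyQ[of x] by simp
qed



lemma sum_PiE_single:
  fixes h :: "nat \<Rightarrow> nat \<Rightarrow> real" and f :: "nat \<Rightarrow> 'v::real_vector"
  assumes A: "finite A" and sA: "s \<in> A" and fin: "\<And>r. r \<in> A \<Longrightarrow> finite (I r)"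
    and one: "\<And>r. r \<in> A - {s} \<Longrightarrow> (\<Sum>j\<in>I r. h r j) = 1"
  shows "(\<Sum>q\<in>PiE A I. (\<Prod>r\<in>A. h r (q r)) *\<^sub>R f (q s)) = (\<Sum>j\<in>I s. h s j *\<^sub>R f j)"
proof -
  define h' where "h' j r x = (if r = s then (if x = j then h s x else 0) else h r x)" for j r x
  have finP: "finite (PiE A I)" using A fin by (simp add: finite_PiE)
  have "(\<Sum>q\<in>PiE A I. (\<Prod>r\<in>A. h r (q r)) *\<^sub>R f (q s))
      = (\<Sum>q\<in>PiE A I. \<Sum>j\<in>I s. (\<Prod>r\<in>A. h' j r (q r)) *\<^sub>R f j)"
  proof (rule sum.cong[OF refl])
    fix q assume q: "q \<in> PiE A I"
    hence qs: "q s \<in> I s" using sA by (auto simp: PiE_def Pi_def)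
    have "(\<Prod>r\<in>A. h' j r (q r)) = (if q s = j then (\<Prod>r\<in>A. h r (q r)) else 0)" for j
    proof -
      have "(\<Prod>r\<in>A. h' j r (q r)) = h' j s (q s) * (\<Prod>r\<in>A - {s}. h' j r (q r))"
        using A sA by (simp add: prod.remove)
      also have "(\<Prod>r\<in>A - {s}. h' j r (q r)) = (\<Prod>r\<in>A - {s}. h r (q r))"
        by (rule prod.cong) (auto simp: h'_def)
      also have "(\<Prod>r\<in>A. h r (q r)) = h s (q s) * (\<Prod>r\<in>A - {s}. h r (q r))"
        using A sA by (simp add: prod.remove)
      ultimately show ?thesis by (simp add: h'_def)
    qed
    hence "(\<Sum>j\<in>I s. (\<Prod>r\<in>A. h' j r (q r)) *\<^sub>R f j) = (\<Sum>j\<in>I s. (if q s = j then (\<Prod>r\<in>A. h r (q r)) *\<^sub>R f j else 0))"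
      by (intro sum.cong) auto
    also have "\<dots> = (\<Prod>r\<in>A. h r (q r)) *\<^sub>R f (q s)"
      using qs fin[OF sA] by (simp add: sum.delta')
    finally show "(\<Prod>r\<in>A. h r (q r)) *\<^sub>R f (q s) = (\<Sum>j\<in>I s. (\<Prod>r\<in>A. h' j r (q r)) *\<^sub>R f j)" by simp
  qed
  also have "\<dots> = (\<Sum>j\<in>I s. (\<Sum>q\<in>PiE A I. \<Prod>r\<in>A. h' j r (q r)) *\<^sub>R f j)"
    by (subst sum.swap) (simp add: scaleR_sum_left)
  also have "\<dots> = (\<Sum>j\<in>I s. h s j *\<^sub>R f j)"
  proof (rule sum.cong[OF refl])
    fix j assume j: "j \<in> I s"
    have "(\<Sum>q\<in>PiE A I. \<Prod>r\<in>A. h' j r (q r)) = (\<Prod>r\<in>A. \<Sum>x\<in>I r. h' j r x)"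
      using A fin by (simp add: prod_sum_PiE)
    also have "\<dots> = (\<Sum>x\<in>I s. h' j s x) * (\<Prod>r\<in>A - {s}. \<Sum>x\<in>I r. h' j r x)"
      using A sA by (simp add: prod.remove)
    also have "(\<Prod>r\<in>A - {s}. \<Sum>x\<in>I r. h' j r x) = (\<Prod>r\<in>A - {s}. 1)"
      by (rule prod.cong[OF refl]) (auto simp: h'_def one)
    also have "(\<Sum>x\<in>I s. h' j s x) = h s j"
      using j fin[OF sA] by (simp add: h'_def sum.delta')
    finally show "(\<Sum>q\<in>PiE A I. \<Prod>r\<in>A. h' j r (q r)) *\<^sub>R f j = h s j *\<^sub>R f j" by simp
  qed
  finally show ?thesis .
qed



lemma cont_lagrange: "continuous_on A (lagrange tau k j)"
  unfolding lagrange_def divide_inverse by (intro continuous_intros)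

lemma integral_telescope:
  fixes f :: "real \<Rightarrow> real"
  assumes T: "strict_mono T" and f: "continuous_on UNIV f" and ab: "a \<le> b"
  shows "(\<Sum>n\<in>{a..<b}. integral {T n..T (Suc n)} f) = integral {T a..T b} f"
  using ab
proof (induction b rule: dec_induct)
  case base
  then show ?case by simp
next
  case (step b)
  have le1: "T a \<le> T b" using step T by (simp add: strict_mono_less_eq)
  have le2: "T b \<le> T (Suc b)" using T by (simp add: strict_mono_less_eq)
  have "(\<Sum>n\<in>{a..<Suc b}. integral {T n..T (Suc n)} f) = integral {T a..T b} f + integral {T b..T (Suc b)} f"
    using step by simp
  also have "\<dots> = integral {T a..T (Suc b)} f"
    by (rule Henstock_Kurzweil_Integration.integral_combine[OF le1 le2], rule integrable_continuous_interval, rule continuous_on_subset[OF f]) simp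
  finally show ?case .
qed

lemma mIdx_eq:
  assumes T: "strict_mono T" and "T j \<le> x" "x < T (Suc j)"
  shows "mIdx T x = j"
  unfolding mIdx_def
proof (rule the_equality)
  show "T j \<le> x \<and> x < T (Suc j)" using assms by simp
next
  fix i assume i: "T i \<le> x \<and> x < T (Suc i)"
  show "i = j"
  proof (rule ccontr)
    assume "i \<noteq> j"
    then consider "Suc i \<le> j" | "Suc j \<le> i" by linarith
    then show False
    proof cases
      case 1 then have "T (Suc i) \<le> T j" using T by (simp add: strict_mono_less_eq)
      then show False using i assms by linarith
    next
      case 2 then have "T (Suc j) \<le> T i" using T by (simp add: strict_mono_less_eq)
      then show False using i assms by linarith
    qed
  qed
qed

lemma nIdx_eq:
  assumes T: "strict_mono tt" and "x \<in> range tt"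
  shows "tt (nIdx tt x) = x"
proof -
  obtain n where n: "tt n = x" using assms by auto
  have "nIdx tt x = n" unfolding nIdx_def
    by (rule the_equality) (use n T in \<open>auto simp: strict_mono_eq\<close>)
  then show ?thesis using n by simp
qed

lemma reindex_back:
  fixes k M :: nat
  assumes "k - 1 \<le> M" "1 \<le> k"
  shows "(\<Sum>j\<in>{M-(k-1)..M}. F j) = (\<Sum>i<k. F (M - i))"
  by (rule sum.reindex_bij_witness[where i="\<lambda>i. M - i" and j="\<lambda>j. M - j"]) 
     (use assms in \<open>auto simp: diff_diff_cancel intro!: arg_cong[where f=F]\<close>)

lemma inj_nodes:
  fixes T :: "nat \<Rightarrow> real" and k M :: nat
  assumes "strict_mono T" "k - 1 \<le> M"
  shows "inj_on (\<lambda>i. T (M - i)) {..<k}"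
  unfolding inj_on_def
proof (intro ballI impI)
  fix x y assume xy: "x \<in> {..<k}" "y \<in> {..<k}" "T (M - x) = T (M - y)"
  then have "M - x = M - y" using strict_mono_eq[OF assms(1)] by blast
  then show "x = y" using xy assms(2) by auto
qed

lemma part_unity:
  fixes T :: "nat \<Rightarrow> real" and k M :: nat
  assumes "strict_mono T" "k - 1 \<le> M" "1 \<le> k"
  shows "(\<Sum>j\<in>{M-(k-1)..M}. lagrange (\<lambda>i. T (M - i)) k (M - j) x) = 1"
proof -
  have "(\<Sum>j\<in>{M-(k-1)..M}. lagrange (\<lambda>i. T (M - i)) k (M - j) x)
      = (\<Sum>i<k. lagrange (\<lambda>i. T (M - i)) k (M - (M - i)) x)"
    by (rule reindex_back) (use assms in auto)
  also have "\<dots> = (\<Sum>i<k. poly 1 (T (M - i)) * lagrange (\<lambda>i. T (M - i)) k i x)"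
    by (rule sum.cong) (use assms in auto)
  also have "\<dots> = poly 1 x"
    by (rule lagrange_exact[OF inj_nodes[OF assms(1,2)]]) (use assms in auto)
  finally show ?thesis by simp
qed



lemma vol_step:
  fixes S k s m n :: nat and t :: "nat \<Rightarrow> nat \<Rightarrow> real" and tt :: "nat \<Rightarrow> real"
    and W :: "nat \<Rightarrow> 'v::real_vector"
  assumes k: "1 \<le> k" and sS: "s < S" and tm: "\<forall>r<S. strict_mono (t r)" and ttm: "strict_mono tt"
    and nk: "k - 1 \<le> n" and Mk: "\<forall>r<S. k - 1 \<le> mIdx (t r) (tt n)" and Ms: "mIdx (t s) (tt n) = m"
  shows "(\<Sum>q\<in>lts_qset S k t tt n. lts_beta S k t tt n q *\<^sub>R W (q s))
       = (\<Sum>j<k. integral {tt n..tt (Suc n)} (lagrange (\<lambda>i. t s (m - i)) k j) *\<^sub>R W (m - j))"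
proof -
  define M where "M r = mIdx (t r) (tt n)" for r
  define L where "L r j x = lagrange (\<lambda>i. t r (M r - i)) k (M r - j) x" for r j x
  define I where "I r = {M r - (k-1) .. M r}" for r
  define c where "c i = ab_coeff tt k n i" for i
  define d where "d = tt (Suc n) - tt n"
  define ell where "ell j = lagrange (\<lambda>i. t s (m - i)) k j" for j
  define lt where "lt i = lagrange (\<lambda>j. tt (n - j)) k i" for i
  define J where "J f = integral {tt n..tt (Suc n)} f" for f :: "real \<Rightarrow> real"
  have Msm: "M s = m" using Ms by (simp add: M_def)
  have mk: "k - 1 \<le> m" using Mk sS Ms by auto
  have dpos: "d > 0" using ttm by (simp add: d_def strict_mono_less)
  have dc: "d * c i = J (lt i)" for i
    using dpos by (simp add: c_def ab_coeff_def J_def lt_def d_def)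
  have beta: "lts_beta S k t tt n q = d * (\<Sum>i<k. c i * (\<Prod>r<S. L r (q r) (tt (n - i))))" for q
    unfolding lts_beta_def d_def c_def L_def M_def ..
  have qset: "lts_qset S k t tt n = PiE {..<S} I" unfolding lts_qset_def I_def M_def ..
  have "(\<Sum>q\<in>lts_qset S k t tt n. lts_beta S k t tt n q *\<^sub>R W (q s))
      = (\<Sum>q\<in>PiE {..<S} I. \<Sum>i<k. (d * c i) *\<^sub>R ((\<Prod>r<S. L r (q r) (tt (n - i))) *\<^sub>R W (q s)))"
    by (simp add: beta qset sum_distrib_left scaleR_sum_left mult.assoc)
  also have "\<dots> = (\<Sum>i<k. (d * c i) *\<^sub>R (\<Sum>q\<in>PiE {..<S} I. (\<Prod>r<S. L r (q r) (tt (n - i))) *\<^sub>R W (q s)))"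
    by (subst sum.swap) (simp add: scaleR_sum_right)
  also have "\<dots> = (\<Sum>i<k. (d * c i) *\<^sub>R (\<Sum>j\<in>I s. L s j (tt (n - i)) *\<^sub>R W j))"
  proof (rule sum.cong[OF refl])
    fix i
    have "(\<Sum>q\<in>PiE {..<S} I. (\<Prod>r<S. L r (q r) (tt (n - i))) *\<^sub>R W (q s)) = (\<Sum>j\<in>I s. L s j (tt (n - i)) *\<^sub>R W j)"
    proof (rule sum_PiE_single)
      fix r assume r: "r \<in> {..<S} - {s}"
      show "(\<Sum>j\<in>I r. L r j (tt (n - i))) = 1"
        unfolding I_def L_def using r tm Mk k by (intro part_unity) (auto simp: M_def)
    qed (use sS in \<open>auto simp: I_def\<close>)
    then show "(d * c i) *\<^sub>R (\<Sum>q\<in>PiE {..<S} I. (\<Prod>r<S. L r (q r) (tt (n - i))) *\<^sub>R W (q s)) = (d * c i) *\<^sub>R (\<Sum>j\<in>I s. L s j (tt (n - i)) *\<^sub>R W j)"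
      by simp
  qed
  also have "\<dots> = (\<Sum>i<k. (d * c i) *\<^sub>R (\<Sum>j<k. ell j (tt (n - i)) *\<^sub>R W (m - j)))"
  proof (rule sum.cong[OF refl])
    fix i
    have "(\<Sum>j\<in>I s. L s j (tt (n - i)) *\<^sub>R W j) = (\<Sum>j<k. L s (m - j) (tt (n - i)) *\<^sub>R W (m - j))"
      unfolding I_def Msm by (rule reindex_back) (use mk k in auto)
    also have "\<dots> = (\<Sum>j<k. ell j (tt (n - i)) *\<^sub>R W (m - j))"
      by (rule sum.cong[OF refl]) (use mk in \<open>auto simp: L_def ell_def Msm\<close>)
    finally show "(d * c i) *\<^sub>R (\<Sum>j\<in>I s. L s j (tt (n - i)) *\<^sub>R W j) = (d * c i) *\<^sub>R (\<Sum>j<k. ell j (tt (n - i)) *\<^sub>R W (m - j))"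
      by simp
  qed
  also have "\<dots> = (\<Sum>j<k. (\<Sum>i<k. J (lt i) * ell j (tt (n - i))) *\<^sub>R W (m - j))"
    (is "_ = ?R")
  proof -
    have "(\<Sum>i<k. (d * c i) *\<^sub>R (\<Sum>j<k. ell j (tt (n - i)) *\<^sub>R W (m - j)))
        = (\<Sum>i<k. \<Sum>j<k. (J (lt i) * ell j (tt (n - i))) *\<^sub>R W (m - j))"
      by (simp add: scaleR_sum_right dc)
    also have "\<dots> = (\<Sum>j<k. \<Sum>i<k. (J (lt i) * ell j (tt (n - i))) *\<^sub>R W (m - j))"
      by (rule sum.swap)
    also have "\<dots> = ?R"
      by (simp add: scaleR_sum_left)
    finally show ?thesis .
  qed
  also have "\<dots> = (\<Sum>j<k. J (ell j) *\<^sub>R W (m - j))"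
  proof (rule sum.cong[OF refl])
    fix j assume j: "j \<in> {..<k}"
    have "(\<Sum>i<k. J (lt i) * ell j (tt (n - i))) = J (\<lambda>x. \<Sum>i<k. ell j (tt (n - i)) * lt i x)"
      unfolding J_def
      by (subst integral_sum) (auto simp: lt_def mult.commute intro!: integrable_continuous_interval continuous_on_mult continuous_on_const cont_lagrange)
    also have "(\<lambda>x. \<Sum>i<k. ell j (tt (n - i)) * lt i x) = ell j"
    proof
      fix x
      have "(\<Sum>i<k. poly (lagpoly (\<lambda>i. t s (m - i)) k j) (tt (n - i)) * lagrange (\<lambda>j. tt (n - j)) k i x)
           = poly (lagpoly (\<lambda>i. t s (m - i)) k j) x"
        by (rule lagrange_exact[OF inj_nodes[OF ttm nk]]) (use degree_lagpoly[of j k "\<lambda>i. t s (m - i)"] j k in \<open>simp del: One_nat_def\<close>)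
      then show "(\<Sum>i<k. ell j (tt (n - i)) * lt i x) = ell j x"
        by (simp add: poly_lagpoly ell_def lt_def)
    qed
    finally show "(\<Sum>i<k. J (lt i) * ell j (tt (n - i))) *\<^sub>R W (m - j) = J (ell j) *\<^sub>R W (m - j)" by simp
  qed
  finally show ?thesis by (simp add: J_def ell_def)
qed



theorem mainTheorem3:
  fixes S k s m :: nat
    and t :: "nat \<Rightarrow> nat \<Rightarrow> real"
    and tt :: "nat \<Rightarrow> real"
    and y :: "nat \<Rightarrow> nat \<Rightarrow> 'v::real_vector"
    and D B :: "nat \<Rightarrow> (nat \<Rightarrow> 'v) \<Rightarrow> 'v"
    and V :: "nat \<Rightarrow> 'v \<Rightarrow> 'v"
  assumes k_pos: "1 \<le> k"
    and s_S: "s < S"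
    and t_mono: "\<forall>r<S. strict_mono (t r)"
    and tt_mono: "strict_mono tt"
    and tt_range: "range tt = (\<Union>r<S. range (t r))"
    and split: "\<forall>r<S. \<forall>ys. D r ys = V r (ys r) + B r ys"
    and m_large: "k - 1 \<le> m"
    and idx_exist: "\<forall>n\<in>{nIdx tt (t s m)..<nIdx tt (t s (Suc m))}. \<forall>r<S.
         \<exists>j. k - 1 \<le> j \<and> t r j \<le> tt n \<and> tt n < t r (Suc j)"
    and scheme: "y s (Suc m) = y s m +
         (\<Sum>n\<in>{nIdx tt (t s m)..<nIdx tt (t s (Suc m))}.
            \<Sum>q\<in>lts_qset S k t tt n. lts_beta S k t tt n q *\<^sub>R D s (\<lambda>r. y r (q r)))"
  shows "y s (Suc m) - y s m =
         (t s (Suc m) - t s m) *\<^sub>R (\<Sum>j<k. ab_coeff (t s) k m j *\<^sub>R V s (y s (m - j)))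
         + (\<Sum>n\<in>{nIdx tt (t s m)..<nIdx tt (t s (Suc m))}.
            \<Sum>q\<in>lts_qset S k t tt n. lts_beta S k t tt n q *\<^sub>R B s (\<lambda>r. y r (q r)))"
proof -
  define N0 where "N0 = nIdx tt (t s m)"
  define N1 where "N1 = nIdx tt (t s (Suc m))"
  define W where "W q = V s (y s q)" for q
  define ell where "ell j = lagrange (\<lambda>i. t s (m - i)) k j" for j
  define g where "g j = nIdx tt (t s j)" for j
  have tsm: "strict_mono (t s)" using t_mono s_S by auto
  have tg: "tt (g j) = t s j" for j
    unfolding g_def by (rule nIdx_eq[OF tt_mono]) (use tt_range s_S in blast)
  have tN0: "tt N0 = t s m" using tg[of m] by (simp add: g_def N0_def)
  have tN1: "tt N1 = t s (Suc m)" using tg[of "Suc m"] by (simp add: g_def N1_def)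
  have gmono: "strict_mono g"
  proof (rule strict_monoI_Suc)
    fix j show "g j < g (Suc j)"
      using tg[of j] tg[of "Suc j"] tsm tt_mono by (metis lessI strict_mono_less)
  qed
  have N0m: "m \<le> N0" using strict_mono_imp_increasing[OF gmono, of m] by (simp add: g_def N0_def)
  have N01: "N0 \<le> N1" using tN0 tN1 tsm tt_mono
    by (metis lessI less_imp_le strict_mono_less)
  have dpos: "t s (Suc m) - t s m > 0" using tsm by (simp add: strict_mono_less)
  have vol: "(\<Sum>q\<in>lts_qset S k t tt n. lts_beta S k t tt n q *\<^sub>R W (q s))
       = (\<Sum>j<k. integral {tt n..tt (Suc n)} (ell j) *\<^sub>R W (m - j))" if n: "n \<in> {N0..<N1}" for n
    unfolding ell_def
  proof (rule vol_step[OF k_pos s_S t_mono tt_mono])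
    show "k - 1 \<le> n" using n N0m m_large by auto
    have le: "tt N0 \<le> tt n" "tt n < tt N1" using n tt_mono by (auto simp: strict_mono_less_eq strict_mono_less)
    show "mIdx (t s) (tt n) = m"
      by (rule mIdx_eq[OF tsm]) (use le tN0 tN1 in auto)
    show "\<forall>r<S. k - 1 \<le> mIdx (t r) (tt n)"
    proof (intro allI impI)
      fix r assume r: "r < S"
      obtain j where j: "k - 1 \<le> j" "t r j \<le> tt n" "tt n < t r (Suc j)"
        using idx_exist n r unfolding N0_def N1_def by blast
      have "mIdx (t r) (tt n) = j" by (rule mIdx_eq) (use j t_mono r in auto)
      then show "k - 1 \<le> mIdx (t r) (tt n)" using j by simp
    qed
  qed
  have Vpart: "(\<Sum>n\<in>{N0..<N1}. \<Sum>q\<in>lts_qset S k t tt n. lts_beta S k t tt n q *\<^sub>R W (q s))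
      = (t s (Suc m) - t s m) *\<^sub>R (\<Sum>j<k. ab_coeff (t s) k m j *\<^sub>R W (m - j))"
  proof -
    have "(\<Sum>n\<in>{N0..<N1}. \<Sum>q\<in>lts_qset S k t tt n. lts_beta S k t tt n q *\<^sub>R W (q s))
        = (\<Sum>n\<in>{N0..<N1}. \<Sum>j<k. integral {tt n..tt (Suc n)} (ell j) *\<^sub>R W (m - j))"
      by (rule sum.cong[OF refl]) (rule vol)
    also have "\<dots> = (\<Sum>j<k. \<Sum>n\<in>{N0..<N1}. integral {tt n..tt (Suc n)} (ell j) *\<^sub>R W (m - j))"
      by (rule sum.swap)
    also have "\<dots> = (\<Sum>j<k. (\<Sum>n\<in>{N0..<N1}. integral {tt n..tt (Suc n)} (ell j)) *\<^sub>R W (m - j))"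
      by (simp add: scaleR_sum_left)
    also have "\<dots> = (\<Sum>j<k. integral {t s m..t s (Suc m)} (ell j) *\<^sub>R W (m - j))"
      by (rule sum.cong[OF refl]) (simp add: integral_telescope[OF tt_mono cont_lagrange N01, unfolded tN0 tN1] ell_def)
    also have "\<dots> = (t s (Suc m) - t s m) *\<^sub>R (\<Sum>j<k. ab_coeff (t s) k m j *\<^sub>R W (m - j))"
      using dpos by (simp add: scaleR_sum_right ab_coeff_def ell_def)
    finally show ?thesis .
  qed
  have Dsplit: "D s (\<lambda>r. y r (q r)) = W (q s) + B s (\<lambda>r. y r (q r))" for q
    using split s_S by (simp add: W_def)
  have "y s (Suc m) - y s m =
      (\<Sum>n\<in>{N0..<N1}. \<Sum>q\<in>lts_qset S k t tt n. lts_beta S k t tt n q *\<^sub>R D s (\<lambda>r. y r (q r)))"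
    using scheme by (simp add: N0_def N1_def)
  also have "\<dots> = (\<Sum>n\<in>{N0..<N1}. \<Sum>q\<in>lts_qset S k t tt n. lts_beta S k t tt n q *\<^sub>R W (q s))
      + (\<Sum>n\<in>{N0..<N1}. \<Sum>q\<in>lts_qset S k t tt n. lts_beta S k t tt n q *\<^sub>R B s (\<lambda>r. y r (q r)))"
    by (simp add: Dsplit scaleR_add_right sum.distrib)
  finally show ?thesis using Vpart by (simp add: N0_def N1_def W_def)
qed

end
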